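(* Let $\mathbb{S}\in\mathbb{Z}^{N_X\times N_e}$, $\mathcal{X}=\mathbb{R}^{N_X}_{>0}$, and $\{\Psi^*_x\}_{x\in\mathcal{X}}$ a family of dissipation functions on $\mathbb{R}^{N_e}$ with conjugates $\Psi_x$. Fix $x\in\mathcal{X}$. Let $\tilde{\mathcal{T}}:=\mathrm{Im}\,\mathbb{S}\subset\mathbb{R}^{N_X}$ and $\tilde{\mathcal{T}}^*:=\mathbb{R}^{N_X}/\mathrm{Ker}\,\mathbb{S}^T$, paired by $\langle v,u\rangle$ (well defined since $\mathrm{Im}\,\mathbb{S}\perp\mathrm{Ker}\,\mathbb{S}^T$). For $v\in\tilde{\mathcal{T}}$ let $j^\dagger(x,v)$ be the unique minimizer of $\Psi_x(j)$ over $\{j\in\mathbb{R}^{N_e}:-\mathbb{S}j=v\}$, and define $$\tilde{\Psi}_x(v):=\Psi_x\big(j^\dagger(x,v)\big)\ (v\in\tilde{\mathcal{T}}),\qquad \tilde{\Psi}^*_x(u):=\Psi^*_x\big(-\mathbb{S}^Tu\big)\ (u\in\tilde{\mathcal{T}}^* ).$$ Then $\tilde{\Psi}_x$ and $\tilde{\Psi}^*_x$ are Legendre–Fenchel conjugates of each other, $\tilde{\Psi}_x(v)=\max_{u\in\tilde{\mathcal{T}}^*}[\langle v,u\rangle-\tilde{\Psi}^*_x(u)]$ and $\tilde{\Psi}^*_x(u)=\max_{v\in\tilde{\mathcal{T}}}[\langle v,u\rangle-\tilde{\Psi}_x(v)]$; their Legendre transformations $v\mapsto\partial\tilde{\Psi}_x(v)$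 and $u\mapsto\partial\tilde{\Psi}^*_x(u)$ are mutually inverse bijections between $\tilde{\mathcal{T}}$ and $\tilde{\mathcal{T}}^*$, where $u=\partial\tilde\Psi_x(v)$ is the class with $\nabla\Psi_x(j^\dagger(x,v))=-\mathbb{S}^Tu$ and $\partial\tilde\Psi^*_x(u)=-\mathbb{S}\nabla\Psi^*_x(-\mathbb{S}^Tu)$; and both $\tilde{\Psi}_x$ and $\tilde{\Psi}^*_x$ are dissipation functions (strictly convex, $1$-coercive, symmetric under sign change, and vanishing at $0$). That is, the dissipation functions on the edge spaces induce a dually flat structure on the restricted tangent and cotangent spaces $(\tilde{\mathcal{T}},\tilde{\mathcal{T}}^* )$.
   Context: A dissipation function on $\mathbb{R}^{N_e}$ is a strictly convex, continuously differentiable, $1$-coercive ($\psi(f)/\|f\|\to\infty$ as $\|f\|\to\infty$), even ($\psi(-f)=\psi(f)$) function $\psi$ with $\psi(0)=0$. $\Psi_x(j):=\max_f[\langle j,f\rangle-\Psi^*_x(f)]$ is the Legendre–Fenchel conjugate of $\Psi^*_x$ (also a dissipation function), and $\nabla\Psi_x,\nabla\Psi^*_x$ are mutually inverse bijections of $\mathbb{R}^{N_e}$. $\langle\cdot,\cdot\rangle$ is the standard pairing. *)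

theory Defs
  imports "HOL-Analysis.Analysis"
begin

definition strictly_convex_on :: "'a::real_vector set \<Rightarrow> ('a \<Rightarrow> real) \<Rightarrow> bool" where
  "strictly_convex_on A f \<longleftrightarrow>
     (\<forall>x\<in>A. \<forall>y\<in>A. x \<noteq> y \<longrightarrow>
        (\<forall>t::real. 0 < t \<and> t < 1 \<longrightarrow> f ((1 - t) *\<^sub>R x + t *\<^sub>R y) < (1 - t) * f x + t * f y))"

definition one_coercive :: "('a::real_normed_vector \<Rightarrow> real) \<Rightarrow> bool" where
  "one_coercive \<psi> \<longleftrightarrow> filterlim (\<lambda>f. \<psi> f / norm f) at_top at_infinity"

definition C1_fun :: "('a::euclidean_space \<Rightarrow> real) \<Rightarrow> bool" where
  "C1_fun \<psi> \<longleftrightarrow> (\<exists>g. (\<forall>f. (\<psi> has_derivative (\<lambda>h. g f \<bullet> h)) (at f)) \<and> continuous_on UNIV g)"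

definition grad :: "('a::euclidean_space \<Rightarrow> real) \<Rightarrow> 'a \<Rightarrow> 'a" where
  "grad \<psi> f = (THE g. (\<psi> has_derivative (\<lambda>h. g \<bullet> h)) (at f))"

definition dissipation :: "('a::euclidean_space \<Rightarrow> real) \<Rightarrow> bool" where
  "dissipation \<psi> \<longleftrightarrow> strictly_convex_on UNIV \<psi> \<and> C1_fun \<psi> \<and> one_coercive \<psi>
      \<and> (\<forall>f. \<psi> (- f) = \<psi> f) \<and> \<psi> 0 = 0"

(* Legendre-Fenchel conjugate (the sup is attained, i.e. a max, for dissipation functions) *)
definition LF_conj :: "('a::real_inner \<Rightarrow> real) \<Rightarrow> 'a \<Rightarrow> real" where
  "LF_conj \<psi>s j = (SUP f. j \<bullet> f - \<psi>s f)"

definition is_max_of :: "'a set \<Rightarrow> ('a \<Rightarrow> real) \<Rightarrow> real \<Rightarrow> bool" where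
  "is_max_of A g m \<longleftrightarrow> (\<exists>a\<in>A. g a = m) \<and> (\<forall>a\<in>A. g a \<le> m)"

definition tang :: "real^'e^'x \<Rightarrow> (real^'x) set" where
  "tang S = range (\<lambda>j. S *v j)"

(* the coset u + Ker S^T, an element of R^{N_X} / Ker S^T *)
definition qcls :: "real^'e^'x \<Rightarrow> real^'x \<Rightarrow> (real^'x) set" where
  "qcls S u = {u'. transpose S *v u' = transpose S *v u}"

definition cotang :: "real^'e^'x \<Rightarrow> (real^'x) set set" where
  "cotang S = range (qcls S)"

definition rep :: "'a set \<Rightarrow> 'a" where
  "rep U = (SOME u. u \<in> U)"

definition dpair :: "real^'x \<Rightarrow> (real^'x) set \<Rightarrow> real" where
  "dpair v U = v \<bullet> rep U"

definition qnorm :: "(real^'x) set \<Rightarrow> real" where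
  "qnorm U = Inf (norm ` U)"

definition is_jdag :: "(real^'e \<Rightarrow> real) \<Rightarrow> real^'e^'x \<Rightarrow> real^'x \<Rightarrow> real^'e \<Rightarrow> bool" where
  "is_jdag \<Psi> S v j \<longleftrightarrow> - (S *v j) = v \<and> (\<forall>j'. - (S *v j') = v \<longrightarrow> \<Psi> j \<le> \<Psi> j')"

definition jdag :: "(real^'e \<Rightarrow> real) \<Rightarrow> real^'e^'x \<Rightarrow> real^'x \<Rightarrow> real^'e" where
  "jdag \<Psi> S v = (THE j. is_jdag \<Psi> S v j)"

definition tPsi :: "(real^'e \<Rightarrow> real) \<Rightarrow> real^'e^'x \<Rightarrow> real^'x \<Rightarrow> real" where
  "tPsi \<Psi> S v = \<Psi> (jdag \<Psi> S v)"

definition tPsistar :: "(real^'e \<Rightarrow> real) \<Rightarrow> real^'e^'x \<Rightarrow> (real^'x) set \<Rightarrow> real" where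
  "tPsistar \<Psi>s S U = \<Psi>s (- (transpose S *v rep U))"

definition dtPsi :: "(real^'e \<Rightarrow> real) \<Rightarrow> real^'e^'x \<Rightarrow> real^'x \<Rightarrow> (real^'x) set" where
  "dtPsi \<Psi> S v = (THE U. U \<in> cotang S \<and> grad \<Psi> (jdag \<Psi> S v) = - (transpose S *v rep U))"

definition dtPsistar :: "(real^'e \<Rightarrow> real) \<Rightarrow> real^'e^'x \<Rightarrow> (real^'x) set \<Rightarrow> real^'x" where
  "dtPsistar \<Psi>s S U = - (S *v grad \<Psi>s (- (transpose S *v rep U)))"

end

theory Submission
  imports Defs
begin


lemma grad_eqI:
  fixes \<psi> :: "'a::euclidean_space \<Rightarrow> real"
  assumes "(\<psi> has_derivative (\<lambda>h. a \<bullet> h)) (at f)"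
  shows "grad \<psi> f = a"
proof -
  have u: "b = a" if "(\<psi> has_derivative (\<lambda>h. b \<bullet> h)) (at f)" for b
  proof -
    have "(\<lambda>h. b \<bullet> h) = (\<lambda>h. a \<bullet> h)" using has_derivative_unique[OF that assms] .
    hence "b \<bullet> (b - a) = a \<bullet> (b - a)" by metis
    hence "(b - a) \<bullet> (b - a) = 0" by (simp add: inner_diff_left)
    thus ?thesis by simp
  qed
  show ?thesis unfolding grad_def using assms u by (rule the_equality)
qed

locale dfun =
  fixes \<phi> :: "'a::euclidean_space \<Rightarrow> real" and g :: "'a \<Rightarrow> 'a"
  assumes sc: "strictly_convex_on UNIV \<phi>"
    and der: "\<And>f. (\<phi> has_derivative (\<lambda>h. g f \<bullet> h)) (at f)"
    and gcont: "continuous_on UNIV g"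
    and coer: "one_coercive \<phi>"
    and even: "\<And>f. \<phi> (- f) = \<phi> f"
    and z: "\<phi> 0 = 0"
begin

lemma cont_phi: "continuous_on A \<phi>"
  by (meson continuous_at_imp_continuous_on der has_derivative_continuous)

lemma sc': "x \<noteq> y \<Longrightarrow> 0 < t \<Longrightarrow> t < 1 \<Longrightarrow> \<phi> ((1 - t) *\<^sub>R x + t *\<^sub>R y) < (1 - t) * \<phi> x + t * \<phi> y"
  using sc unfolding strictly_convex_on_def by blast

lemma cvx: "convex_on UNIV \<phi>"
proof (rule convex_onI)
  fix t x y :: "_" assume t: "(0::real) < t" "t < 1"
  show "\<phi> ((1 - t) *\<^sub>R x + t *\<^sub>R y) \<le> (1 - t) * \<phi> x + t * \<phi> y"
  proof (cases "x = y")
    case True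
    have "(1 - t) *\<^sub>R x + t *\<^sub>R x = x" by (simp add: algebra_simps)
    then show ?thesis using True by (simp add: algebra_simps)
  next
    case False
    then show ?thesis using sc'[OF False t] by simp
  qed
qed simp

lemma phi_nonneg: "0 \<le> \<phi> f"
proof -
  have "\<phi> ((1 - 1/2) *\<^sub>R f + (1/2) *\<^sub>R (-f)) \<le> (1 - 1/2) * \<phi> f + (1/2) * \<phi> (-f)"
    using convex_onD[OF cvx, of "1/2" f "-f"] by simp
  moreover have "(1 - 1/2) *\<^sub>R f + (1/2::real) *\<^sub>R (-f) = 0" by (simp add: algebra_simps)
  ultimately show ?thesis using z even[of f] by simp
qed

lemma coer_bound: "\<exists>R>0. \<forall>f. R \<le> norm f \<longrightarrow> M * norm f \<le> \<phi> f"
proof -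
  have "eventually (\<lambda>f. M \<le> \<phi> f / norm f) at_infinity"
    using coer unfolding one_coercive_def filterlim_at_top by blast
  then obtain b where b: "\<And>f. b \<le> norm f \<Longrightarrow> M \<le> \<phi> f / norm f"
    unfolding eventually_at_infinity by blast
  show ?thesis
  proof (intro exI[of _ "max b 1"] conjI allI impI)
    fix f :: 'a assume "max b 1 \<le> norm f"
    hence "b \<le> norm f" "0 < norm f" by auto
    with b[of f] show "M * norm f \<le> \<phi> f" by (simp add: pos_le_divide_eq)
  qed simp
qed

lemma grad_ineq: "\<phi> f + g f \<bullet> (f' - f) \<le> \<phi> f'"
proof -
  define p where "p t = \<phi> (f + t *\<^sub>R (f' - f))" for t :: real
  have cp: "convex_on UNIV p"
  proof (rule convex_onI)
    fix t x y :: real assume t: "0 < t" "t < 1"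
    have e: "f + ((1 - t) * x + t * y) *\<^sub>R (f' - f) = (1 - t) *\<^sub>R (f + x *\<^sub>R (f' - f)) + t *\<^sub>R (f + y *\<^sub>R (f' - f))"
      by (simp add: algebra_simps)
    show "p ((1 - t) *\<^sub>R x + t *\<^sub>R y) \<le> (1 - t) * p x + t * p y"
      unfolding p_def using convex_onD[OF cvx, of t "f + x *\<^sub>R (f' - f)" "f + y *\<^sub>R (f' - f)"] t e
      by simp
  qed simp
  have d: "(p has_field_derivative (g f \<bullet> (f' - f))) (at 0 within UNIV)"
  proof -
    have "((\<lambda>t. f + t *\<^sub>R (f' - f)) has_derivative (\<lambda>t. t *\<^sub>R (f' - f))) (at 0)"
      by (auto intro!: derivative_eq_intros)
    from has_derivative_compose[OF this, of \<phi> "\<lambda>h. g f \<bullet> h"] der[of f]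
    have "(p has_derivative (\<lambda>t. g f \<bullet> (t *\<^sub>R (f' - f)))) (at 0)"
      unfolding p_def o_def by simp
    moreover have "(\<lambda>t. g f \<bullet> (t *\<^sub>R (f' - f))) = (*) (g f \<bullet> (f' - f))"
      by (auto simp: mult.commute)
    ultimately show ?thesis unfolding has_field_derivative_def by simp
  qed
  have "p 1 - p 0 \<ge> (g f \<bullet> (f' - f)) * (1 - 0)"
    by (rule convex_on_imp_above_tangent[OF cp]) (use d in auto)
  thus ?thesis unfolding p_def by simp
qed

definition maxim :: "'a \<Rightarrow> 'a \<Rightarrow> bool" where
  "maxim j f \<longleftrightarrow> (\<forall>f'. j \<bullet> f' - \<phi> f' \<le> j \<bullet> f - \<phi> f)"

lemma max_exists: "\<exists>f. maxim j f"
proof -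
  obtain R where R: "R > 0" "\<And>f. R \<le> norm f \<Longrightarrow> (norm j + 1) * norm f \<le> \<phi> f"
    using coer_bound[of "norm j + 1"] by blast
  have "\<exists>x\<in>cball 0 R. \<forall>y\<in>cball 0 R. j \<bullet> y - \<phi> y \<le> j \<bullet> x - \<phi> x"
    by (rule continuous_attains_sup) (use R in \<open>auto intro!: continuous_intros cont_phi\<close>)
  then obtain x where x: "x \<in> cball 0 R" "\<And>y. y \<in> cball 0 R \<Longrightarrow> j \<bullet> y - \<phi> y \<le> j \<bullet> x - \<phi> x" by blast
  have x0: "0 \<le> j \<bullet> x - \<phi> x" using x(2)[of 0] R z by simp
  have "j \<bullet> y - \<phi> y \<le> j \<bullet> x - \<phi> x" for y
  proof (cases "y \<in> cball 0 R")
    case True then show ?thesis using x by blast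
  next
    case False
    hence "R \<le> norm y" by simp
    hence "(norm j + 1) * norm y \<le> \<phi> y" by (rule R)
    moreover have "j \<bullet> y \<le> norm j * norm y" by (rule norm_cauchy_schwarz)
    moreover have "(norm j + 1) * norm y = norm j * norm y + norm y" by (simp add: distrib_right)
    ultimately show ?thesis using x0 norm_ge_zero[of y] by linarith
  qed
  thus ?thesis unfolding maxim_def by blast
qed

lemma max_unique: "maxim j f1 \<Longrightarrow> maxim j f2 \<Longrightarrow> f1 = f2"
proof (rule ccontr)
  assume m: "maxim j f1" "maxim j f2" and ne: "f1 \<noteq> f2"
  define c where "c = (1/2::real) *\<^sub>R f1 + (1/2::real) *\<^sub>R f2"
  have lt: "\<phi> c < (1/2) * \<phi> f1 + (1/2) * \<phi> f2"
    using sc'[OF ne, of "1/2"] by (simp add: c_def)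
  have e: "j \<bullet> c = (1/2) * (j \<bullet> f1) + (1/2) * (j \<bullet> f2)"
    by (simp add: inner_add_right c_def)
  have "j \<bullet> f1 - \<phi> f1 = j \<bullet> f2 - \<phi> f2" using m unfolding maxim_def by (meson antisym)
  moreover have "j \<bullet> c - \<phi> c \<le> j \<bullet> f1 - \<phi> f1"
    using m unfolding maxim_def by blast
  ultimately show False using lt e by linarith
qed

lemma max_grad: "maxim j f \<Longrightarrow> g f = j"
proof -
  assume m: "maxim j f"
  have d: "((\<lambda>f. j \<bullet> f - \<phi> f) has_derivative (\<lambda>h. j \<bullet> h - g f \<bullet> h)) (at f)"
    by (intro has_derivative_diff der) (auto intro!: derivative_eq_intros)
  have "(\<lambda>h. j \<bullet> h - g f \<bullet> h) = (\<lambda>h. 0)"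
    by (rule differential_zero_maxmin[OF _ _ d, of UNIV]) (use m in \<open>auto simp: maxim_def\<close>)
  hence "j \<bullet> (j - g f) - g f \<bullet> (j - g f) = 0" by metis
  hence "(j - g f) \<bullet> (j - g f) = 0" by (simp add: inner_diff_left)
  thus ?thesis by simp
qed

lemma grad_max: "maxim (g f) f"
proof -
  have "g f \<bullet> f' - \<phi> f' \<le> g f \<bullet> f - \<phi> f" for f'
    using grad_ineq[of f f'] by (simp add: inner_diff_right)
  thus ?thesis unfolding maxim_def by blast
qed

definition h :: "'a \<Rightarrow> 'a" where "h j = (THE f. maxim j f)"

lemma h_max: "maxim j (h j)"
proof -
  obtain f where "maxim j f" using max_exists by blast
  thus ?thesis unfolding h_def using max_unique by (metis (no_types, lifting) theI)
qed

lemma g_h[simp]: "g (h j) = j" using h_max max_grad by blast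
lemma h_g[simp]: "h (g f) = f" using h_max grad_max max_unique by blast

abbreviation "Psi \<equiv> LF_conj \<phi>"

lemma Psi_eq: "Psi j = j \<bullet> h j - \<phi> (h j)"
  unfolding LF_conj_def
  by (rule cSup_eq_maximum) (use h_max in \<open>auto simp: maxim_def\<close>)

lemma Psi_ge: "j \<bullet> f - \<phi> f \<le> Psi j"
  using Psi_eq h_max unfolding maxim_def by simp

lemma Psi_attain: "j \<bullet> f - \<phi> f = Psi j \<Longrightarrow> f = h j"
proof -
  assume a: "j \<bullet> f - \<phi> f = Psi j"
  have "maxim j f" unfolding maxim_def using Psi_ge a by simp
  thus ?thesis using max_unique h_max by blast
qed

lemma h_bound: "\<exists>R. \<forall>j. norm j \<le> r \<longrightarrow> norm (h j) \<le> R"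
proof -
  obtain R where R: "R > 0" "\<And>f. R \<le> norm f \<Longrightarrow> (r + 1) * norm f \<le> \<phi> f"
    using coer_bound[of "r + 1"] by blast
  have "norm (h j) \<le> R" if "norm j \<le> r" for j
  proof (rule ccontr)
    assume "\<not> norm (h j) \<le> R"
    hence a: "R \<le> norm (h j)" "0 < norm (h j)" using R by auto
    have "0 \<le> j \<bullet> h j - \<phi> (h j)" using h_max[of j] z unfolding maxim_def by (metis diff_zero inner_zero_right)
    moreover have "j \<bullet> h j \<le> r * norm (h j)"
      using norm_cauchy_schwarz[of j "h j"] that a by (meson dual_order.trans mult_right_mono norm_ge_zero)
    moreover have "(r+1)*norm(h j) = r*norm(h j) + norm (h j)" by (simp add: distrib_right)
    ultimately show False using R(2)[OF a(1)] a(2) by linarith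
  qed
  thus ?thesis by blast
qed

lemma h_cont: "continuous_on UNIV h"
proof -
  have "isCont h j0" for j0
  proof -
    obtain R where R: "\<And>j. norm j \<le> norm j0 + 1 \<Longrightarrow> norm (h j) \<le> R" using h_bound by blast
    have "continuous_on (g ` cball 0 R) h"
      by (rule continuous_on_inv) (auto intro: continuous_on_subset[OF gcont])
    moreover have "cball j0 1 \<subseteq> g ` cball 0 R"
    proof
      fix y assume "y \<in> cball j0 1"
      hence "dist j0 y \<le> 1" by simp
      moreover have "norm y \<le> norm j0 + norm (y - j0)" by (rule norm_triangle_sub)
      moreover have "norm (y - j0) = dist j0 y" by (simp add: dist_norm norm_minus_commute)
      ultimately have "norm y \<le> norm j0 + 1" by linarith
      hence "h y \<in> cball 0 R" using R by simp
      thus "y \<in> g ` cball 0 R" by (metis g_h image_eqI)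
    qed
    ultimately have "continuous_on (cball j0 1) h" by (rule continuous_on_subset)
    thus ?thesis using continuous_on_interior[of "cball j0 1" h j0] by simp
  qed
  thus ?thesis by (simp add: continuous_at_imp_continuous_on)
qed

end


context dfun begin

lemma Psi_sub: "Psi j + (j' - j) \<bullet> h j \<le> Psi j'"
  using Psi_eq[of j] Psi_ge[of j' "h j"] by (simp add: inner_diff_left)

lemma Psi_der: "(Psi has_derivative (\<lambda>d. h j \<bullet> d)) (at j)"
  unfolding has_derivative_at
proof
  show "bounded_linear ((\<bullet>) (h j))" by (rule bounded_linear_inner_right)
  have b: "norm (Psi (j + d) - Psi j - h j \<bullet> d) / norm d \<le> norm (h (j + d) - h j)" for d
  proof -
    have 1: "0 \<le> Psi (j + d) - Psi j - h j \<bullet> d" using Psi_sub[of j "j + d"] by (simp add: inner_commute)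
    have 2: "Psi (j + d) - Psi j - h j \<bullet> d \<le> d \<bullet> (h (j + d) - h j)"
      using Psi_sub[of "j + d" j] by (simp add: inner_diff_right inner_commute)
    have 3: "d \<bullet> (h (j + d) - h j) \<le> norm d * norm (h (j + d) - h j)" by (rule norm_cauchy_schwarz)
    show ?thesis
    proof (cases "d = 0")
      case True then show ?thesis by simp
    next
      case False
      hence "norm d > 0" by simp
      thus ?thesis using 1 2 3 by (simp add: divide_le_eq mult.commute)
    qed
  qed
  have "((\<lambda>d. h (j + d) - h j) \<longlongrightarrow> 0) (at 0)"
  proof -
    have "isCont h j" using h_cont by (simp add: continuous_on_eq_continuous_at)
    hence "((\<lambda>d. h (j + d)) \<longlongrightarrow> h j) (at 0)"
      by (simp add: isCont_def LIM_offset_zero)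
    thus ?thesis by (simp add: LIM_zero)
  qed
  hence "((\<lambda>d. norm (h (j + d) - h j)) \<longlongrightarrow> 0) (at 0)" by (simp add: tendsto_norm_zero)
  thus "((\<lambda>d. norm (Psi (j + d) - Psi j - h j \<bullet> d) / norm d) \<longlongrightarrow> 0) (at 0)"
    by (rule Lim_null_comparison[rotated]) (use b in \<open>auto intro!: always_eventually\<close>)
qed

lemma grad_Psi: "grad Psi j = h j" by (rule grad_eqI[OF Psi_der])
lemma grad_phi: "grad \<phi> f = g f" by (rule grad_eqI[OF der])

lemma Psi_cont: "continuous_on A Psi"
  by (meson continuous_at_imp_continuous_on Psi_der has_derivative_continuous)

lemma Psi_sc: "j1 \<noteq> j2 \<Longrightarrow> 0 < t \<Longrightarrow> t < 1 \<Longrightarrow> Psi ((1 - t) *\<^sub>R j1 + t *\<^sub>R j2) < (1 - t) * Psi j1 + t * Psi j2"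
proof -
  assume ne: "j1 \<noteq> j2" and t: "0 < t" "t < 1"
  define jt where "jt = (1 - t) *\<^sub>R j1 + t *\<^sub>R j2"
  define f where "f = h jt"
  have e1: "Psi jt = jt \<bullet> f - \<phi> f" using Psi_eq f_def by simp
  have e2: "jt \<bullet> f = (1 - t) * (j1 \<bullet> f) + t * (j2 \<bullet> f)" by (simp add: jt_def inner_add_left)
  have e: "Psi jt = (1 - t) * (j1 \<bullet> f - \<phi> f) + t * (j2 \<bullet> f - \<phi> f)"
    using e1 e2 by (simp add: algebra_simps)
  have a1: "j1 \<bullet> f - \<phi> f \<le> Psi j1" and a2: "j2 \<bullet> f - \<phi> f \<le> Psi j2" by (rule Psi_ge)+
  have "j1 \<bullet> f - \<phi> f < Psi j1 \<or> j2 \<bullet> f - \<phi> f < Psi j2"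
  proof (rule ccontr)
    assume "\<not> ?thesis"
    hence "j1 \<bullet> f - \<phi> f = Psi j1" "j2 \<bullet> f - \<phi> f = Psi j2" using a1 a2 by auto
    hence "f = h j1" "f = h j2" by (auto intro: Psi_attain)
    hence "g f = j1" "g f = j2" by (metis g_h)+
    with ne show False by simp
  qed
  hence "(1 - t) * (j1 \<bullet> f - \<phi> f) + t * (j2 \<bullet> f - \<phi> f) < (1 - t) * Psi j1 + t * Psi j2"
    using a1 a2 t by (smt (verit) mult_le_cancel_left_pos mult_less_cancel_left_pos)
  thus ?thesis using e unfolding jt_def[symmetric] by simp
qed

lemma Psi_coer: "\<exists>C. \<forall>j. M * norm j - C \<le> Psi j" if "M \<ge> 0"
proof -
  have "\<exists>x\<in>cball 0 M. \<forall>y\<in>cball 0 M. \<phi> y \<le> \<phi> x"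
    by (rule continuous_attains_sup) (use that in \<open>auto intro: cont_phi\<close>)
  then obtain x where "\<forall>y\<in>cball 0 M. \<phi> y \<le> \<phi> x" by blast
  then obtain C where C: "\<And>y. norm y \<le> M \<Longrightarrow> \<phi> y \<le> C" by (metis mem_cball_0)
  have "M * norm j - C \<le> Psi j" for j
  proof -
    define f where "f = (M / norm j) *\<^sub>R j"
    have nf: "norm f \<le> M" using that by (cases "j = 0") (auto simp: f_def)
    have jf: "j \<bullet> f = M * norm j"
      by (cases "j = 0") (auto simp: f_def inner_commute power2_norm_eq_inner[symmetric] power2_eq_square)
    show ?thesis using Psi_ge[of j f] C[OF nf] jf by linarith
  qed
  thus ?thesis by blast
qed

lemma Psi_nonneg: "0 \<le> Psi j" using Psi_ge[of j 0] z by simp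

lemma Psi_zero: "Psi 0 = 0" using Psi_eq[of 0] phi_nonneg[of "h 0"] Psi_nonneg[of 0] by simp

lemma Psi_even: "Psi (- j) = Psi j"
proof -
  have "Psi (- j) \<le> Psi j" for j
    using Psi_eq[of "-j"] Psi_ge[of j "- h (-j)"] even[of "h (-j)"] by simp
  from this[of j] this[of "-j"] show ?thesis by simp
qed

end



lemma deriv_squeeze:
  fixes p q :: "real \<Rightarrow> real"
  assumes lo: "\<And>t. p 0 + t * D \<le> p t" and up: "\<And>t. p t \<le> q t" and q0: "q 0 = p 0"
    and dq: "(q has_real_derivative D) (at 0)"
  shows "(p has_real_derivative D) (at 0)"
proof -
  have "((\<lambda>t. (q (0 + t) - q 0) / t) \<longlongrightarrow> D) (at 0)" using dq by (simp add: DERIV_def)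
  hence "((\<lambda>t. (q t - q 0) / t - D) \<longlongrightarrow> 0) (at 0)" by (simp add: LIM_zero)
  hence a: "((\<lambda>t. norm ((q t - q 0) / t - D)) \<longlongrightarrow> 0) (at 0)" by (rule tendsto_norm_zero)
  have b: "norm ((p t - p 0) / t - D) \<le> norm ((q t - q 0) / t - D)" if "t \<noteq> 0" for t
  proof -
    have e1: "(p t - p 0) / t - D = (p t - p 0 - t * D) / t" using that by (simp add: field_simps)
    have e2: "(q t - q 0) / t - D = (q t - q 0 - t * D) / t" using that by (simp add: field_simps)
    have "0 \<le> p t - p 0 - t * D" "p t - p 0 - t * D \<le> q t - q 0 - t * D" using lo[of t] up[of t] q0 by auto
    hence "\<bar>p t - p 0 - t * D\<bar> \<le> \<bar>q t - q 0 - t * D\<bar>" by linarith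
    thus ?thesis unfolding e1 e2 using that by (simp add: divide_right_mono)
  qed
  have "((\<lambda>t. (p t - p 0) / t - D) \<longlongrightarrow> 0) (at 0)"
    by (rule Lim_null_comparison[OF _ a]) (use b in \<open>auto simp: eventually_at_filter\<close>)
  hence "((\<lambda>t. (p (0 + t) - p 0) / t) \<longlongrightarrow> D) (at 0)" by (simp add: LIM_zero_iff)
  thus ?thesis by (simp add: DERIV_def)
qed

lemma adj: "(S *v j) \<bullet> u = j \<bullet> (transpose S *v u)" for S :: "real^'e::finite^'x::finite"
  by (metis dot_lmul_matrix vector_transpose_matrix)

lemma qcls_rep_in: "rep (qcls S u) \<in> qcls S u"
  unfolding rep_def by (rule someI[of _ u]) (simp add: qcls_def)

lemma T_rep[simp]: "transpose S *v rep (qcls S u) = transpose S *v u"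
  using qcls_rep_in[of S u] by (simp add: qcls_def)

lemma qcls_eq: "transpose S *v u = transpose S *v u' \<Longrightarrow> qcls S u = qcls S u'"
  by (simp add: qcls_def)

lemma cotang_rep: "U \<in> cotang S \<Longrightarrow> U = qcls S (rep U)"
proof -
  assume "U \<in> cotang S"
  then obtain u where u: "U = qcls S u" unfolding cotang_def by blast
  show ?thesis unfolding u using qcls_eq[OF T_rep[of S u, symmetric]] .
qed

lemma mv_neg: "A *v (- x) = - (A *v x)" for A :: "real^'n::finite^'m::finite"
proof -
  have "A *v (- x) + A *v x = 0" by (simp flip: matrix_vector_right_distrib)
  thus ?thesis by (simp add: eq_neg_iff_add_eq_0)
qed

lemma tang_iff: "v \<in> tang S \<longleftrightarrow> (\<exists>j. - (S *v j) = v)"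
proof
  assume "v \<in> tang S"
  then obtain j where "v = S *v j" unfolding tang_def by blast
  hence "- (S *v (- j)) = v" by (simp add: mv_neg)
  thus "\<exists>j. - (S *v j) = v" by blast
next
  assume "\<exists>j. - (S *v j) = v"
  then obtain j where "- (S *v j) = v" by blast
  hence "v = S *v (- j)" by (simp add: mv_neg)
  thus "v \<in> tang S" unfolding tang_def by blast
qed

locale dfunS = dfun \<phi> g for \<phi> :: "real^'e::finite \<Rightarrow> real" and g +
  fixes S :: "real^'e^'x::finite"
begin

lemma jdag_ex: "v \<in> tang S \<Longrightarrow> \<exists>j. is_jdag Psi S v j"
proof -
  assume "v \<in> tang S"
  then obtain j0 where j0: "- (S *v j0) = v" using tang_iff by blast
  obtain C where C: "\<And>j. 1 * norm j - C \<le> Psi j" using Psi_coer[of 1] by auto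
  define R where "R = max (norm j0) (Psi j0 + C + 1)"
  define L where "L = {j. - (S *v j) = v}"
  have cl: "closed L" unfolding L_def
  proof (rule closed_Collect_eq)
    have "continuous_on UNIV (\<lambda>x. S *v x)" by (rule linear_continuous_on) simp
    thus "continuous_on UNIV (\<lambda>x. - (S *v x))" by (rule continuous_on_minus)
  qed simp
  have j0L: "j0 \<in> L \<inter> cball 0 R" using j0 unfolding L_def R_def by simp
  have "compact (L \<inter> cball 0 R)" using cl by (rule closed_Int_compact) simp
  moreover have "L \<inter> cball 0 R \<noteq> {}" using j0L by blast
  moreover have "continuous_on (L \<inter> cball 0 R) Psi" by (rule Psi_cont)
  ultimately have "\<exists>x\<in>L \<inter> cball 0 R. \<forall>y\<in>L \<inter> cball 0 R. Psi x \<le> Psi y"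
    by (rule continuous_attains_inf)
  then obtain x where x: "x \<in> L" "\<And>y. y \<in> L \<inter> cball 0 R \<Longrightarrow> Psi x \<le> Psi y" by blast
  have "Psi x \<le> Psi y" if "y \<in> L" for y
  proof (cases "norm y \<le> R")
    case True then show ?thesis using x(2)[of y] that by simp
  next
    case False
    have "Psi x \<le> Psi j0" using x(2)[OF j0L] .
    moreover have "Psi j0 + C + 1 \<le> R" unfolding R_def by simp
    moreover have "norm y - C \<le> Psi y" using C[of y] by simp
    ultimately show ?thesis using False by linarith
  qed
  hence "is_jdag Psi S v x" using x(1) unfolding is_jdag_def L_def by blast
  thus ?thesis by blast
qed

lemma jdag_unique: "is_jdag Psi S v j1 \<Longrightarrow> is_jdag Psi S v j2 \<Longrightarrow> j1 = j2"
proof (rule ccontr)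
  assume a: "is_jdag Psi S v j1" "is_jdag Psi S v j2" "j1 \<noteq> j2"
  define c where "c = (1 - 1/2::real) *\<^sub>R j1 + (1/2::real) *\<^sub>R j2"
  have e1: "- (S *v j1) = v" "- (S *v j2) = v" using a(1,2) unfolding is_jdag_def by simp_all
  have e: "S *v j1 = -v" "S *v j2 = -v" using e1 by (simp_all add: minus_equation_iff)
  have "S *v c = (1 - 1/2) *\<^sub>R (-v) + (1/2::real) *\<^sub>R (-v)"
    by (simp only: c_def matrix_vector_right_distrib matrix_vector_mult_scaleR e)
  also have "\<dots> = -v" by (simp only: scaleR_left_distrib[symmetric]) simp
  finally have "- (S *v c) = v" by simp
  hence "Psi j1 \<le> Psi c" using a(1) unfolding is_jdag_def by blast
  moreover have "Psi c < (1/2) * Psi j1 + (1/2) * Psi j2" using Psi_sc[of j1 j2 "1/2"] a(3) by (simp add: c_def)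
  moreover have "Psi j1 \<le> Psi j2" using a(1) e1(2) unfolding is_jdag_def by blast
  moreover have "Psi j2 \<le> Psi j1" using a(2) e1(1) unfolding is_jdag_def by blast
  ultimately show False by linarith
qed

lemma jdag_eq: assumes "is_jdag Psi S v j" shows "jdag Psi S v = j"
  unfolding jdag_def
proof (rule the_equality)
  show "is_jdag Psi S v j" by (rule assms)
  fix x assume "is_jdag Psi S v x" thus "x = j" using assms by (rule jdag_unique)
qed

lemma jdag: "v \<in> tang S \<Longrightarrow> is_jdag Psi S v (jdag Psi S v)"
proof -
  assume "v \<in> tang S"
  then obtain j where j: "is_jdag Psi S v j" using jdag_ex by blast
  thus ?thesis using jdag_eq[OF j] by simp
qed

lemma KKT: "is_jdag Psi S v j \<Longrightarrow> \<exists>u. h j = - (transpose S *v u)"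
proof -
  assume a: "is_jdag Psi S v j"
  have orth: "h j \<bullet> k = 0" if k: "S *v k = 0" for k
  proof -
    define p where "p = (\<lambda>t::real. Psi (j + t *\<^sub>R k))"
    have d: "(p has_derivative (\<lambda>t. h j \<bullet> (t *\<^sub>R k))) (at 0)"
    proof -
      have i: "((\<lambda>t. j + t *\<^sub>R k) has_derivative (\<lambda>t. t *\<^sub>R k)) (at 0)"
        by (auto intro!: derivative_eq_intros)
      show ?thesis using has_derivative_compose[OF i Psi_der[of "j + 0 *\<^sub>R k"]] by (simp add: p_def)
    qed
    have "\<forall>y\<in>UNIV. p 0 \<le> p y"
    proof
      fix y :: real
      have "- (S *v (j + y *\<^sub>R k)) = v" using a k unfolding is_jdag_def
        by (simp add: matrix_vector_right_distrib matrix_vector_mult_scaleR)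
      thus "p 0 \<le> p y" using a unfolding is_jdag_def p_def by simp
    qed
    hence "(\<lambda>t. h j \<bullet> (t *\<^sub>R k)) = (\<lambda>t. 0)"
      by (intro differential_zero_maxmin[OF _ _ d, of UNIV]) auto
    from fun_cong[OF this, of 1] show ?thesis by simp
  qed
  define V where "V = range (\<lambda>u. transpose S *v u)"
  have sV: "subspace V" unfolding V_def
    by (rule linear_subspace_image) (auto simp: matrix_vector_mul_linear)
  obtain y z where yz: "y \<in> span V" "\<And>w. w \<in> span V \<Longrightarrow> orthogonal z w" "h j = y + z"
    using orthogonal_subspace_decomp_exists[of V "h j"] by blast
  have "z \<bullet> (transpose S *v u) = 0" for u
  proof -
    have "transpose S *v u \<in> span V" unfolding V_def by (rule span_base) (rule rangeI)
    from yz(2)[OF this] show ?thesis unfolding orthogonal_def .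
  qed
  hence "(S *v z) \<bullet> (S *v z) = 0" by (simp add: adj)
  hence "S *v z = 0" by simp
  hence "h j \<bullet> z = 0" by (rule orth)
  moreover have "y \<bullet> z = 0" using yz(2)[OF yz(1)] by (simp add: orthogonal_def inner_commute)
  ultimately have "z \<bullet> z = 0" using yz(3) by (simp add: inner_add_left)
  hence hy: "h j = y" using yz(3) by simp
  have "y \<in> V" using yz(1) sV by (metis span_eq_iff)
  then obtain u where "y = transpose S *v u" unfolding V_def by blast
  hence "h j = - (transpose S *v (- u))" using hy by (simp only: mv_neg minus_minus)
  thus ?thesis by blast
qed

lemma KKT_suff: "- (S *v j) = v \<Longrightarrow> h j = - (transpose S *v u) \<Longrightarrow> is_jdag Psi S v j"
proof -
  assume a: "- (S *v j) = v" "h j = - (transpose S *v u)"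
  have "Psi j \<le> Psi j'" if "- (S *v j') = v" for j'
  proof -
    have "S *v j' = S *v j" using a(1) that by (metis neg_equal_iff_equal)
    hence "S *v (j' - j) = 0" by (simp add: matrix_vector_mult_diff_distrib)
    hence "(j' - j) \<bullet> h j = 0" using a(2) adj[of S "j' - j" u] by simp
    thus ?thesis using Psi_sub[of j j'] by simp
  qed
  thus ?thesis using a unfolding is_jdag_def by blast
qed

end



declare transpose_matrix_vector[simp del]

context dfunS begin

lemma pair_lem: "(- (S *v j)) \<bullet> r = j \<bullet> (- (transpose S *v r))"
  using adj[of S j r] by (simp add: inner_minus_left inner_minus_right)

lemma dtPsi_char:
  assumes v: "v \<in> tang S"
  shows "dtPsi Psi S v \<in> cotang S \<and> h (jdag Psi S v) = - (transpose S *v rep (dtPsi Psi S v))"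
proof -
  define j where "j = jdag Psi S v"
  have jj: "is_jdag Psi S v j" unfolding j_def by (rule jdag[OF v])
  obtain u where u: "h j = - (transpose S *v u)" using KKT[OF jj] by blast
  define U0 where "U0 = qcls S u"
  have P0: "U0 \<in> cotang S \<and> grad Psi j = - (transpose S *v rep U0)"
    unfolding U0_def cotang_def grad_Psi using u T_rep[of S u] by simp
  have uq: "U = U0" if "U \<in> cotang S \<and> grad Psi j = - (transpose S *v rep U)" for U
  proof -
    have "transpose S *v rep U = transpose S *v u" using that u unfolding grad_Psi by simp
    hence "qcls S (rep U) = qcls S u" by (rule qcls_eq)
    thus ?thesis using cotang_rep[of U S] that unfolding U0_def by simp
  qed
  have "dtPsi Psi S v = U0" unfolding dtPsi_def j_def[symmetric]
    by (rule the_equality) (use P0 uq in blast)+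
  thus ?thesis using P0 unfolding j_def grad_Psi by simp
qed

lemma dtPsi_eq:
  assumes v: "v \<in> tang S" and U: "U \<in> cotang S" and e: "h (jdag Psi S v) = - (transpose S *v rep U)"
  shows "dtPsi Psi S v = U"
proof -
  have c: "dtPsi Psi S v \<in> cotang S" "h (jdag Psi S v) = - (transpose S *v rep (dtPsi Psi S v))"
    using dtPsi_char[OF v] by auto
  have "transpose S *v rep (dtPsi Psi S v) = transpose S *v rep U" using c(2) e by simp
  hence "qcls S (rep (dtPsi Psi S v)) = qcls S (rep U)" by (rule qcls_eq)
  thus ?thesis using cotang_rep[OF c(1)] cotang_rep[OF U] by simp
qed

lemma tang_add: "v \<in> tang S \<Longrightarrow> w \<in> tang S \<Longrightarrow> v + t *\<^sub>R w \<in> tang S"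
proof -
  assume "v \<in> tang S" "w \<in> tang S"
  then obtain j k where "- (S *v j) = v" "- (S *v k) = w" using tang_iff by metis
  hence "- (S *v (j + t *\<^sub>R k)) = v + t *\<^sub>R w"
    by (auto simp: matrix_vector_right_distrib matrix_vector_mult_scaleR)
  thus ?thesis using tang_iff by blast
qed

lemma LF1: assumes v: "v \<in> tang S"
  shows "is_max_of (cotang S) (\<lambda>U. dpair v U - tPsistar \<phi> S U) (tPsi Psi S v)"
proof -
  define j where "j = jdag Psi S v"
  have jv: "- (S *v j) = v" using jdag[OF v] unfolding j_def is_jdag_def by blast
  have key: "v \<bullet> r = j \<bullet> (- (transpose S *v r))" for r using pair_lem[of j r] jv by simp
  have c: "dtPsi Psi S v \<in> cotang S" "h j = - (transpose S *v rep (dtPsi Psi S v))"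
    using dtPsi_char[OF v] unfolding j_def by auto
  show ?thesis unfolding is_max_of_def dpair_def tPsistar_def tPsi_def j_def[symmetric]
  proof (intro conjI ballI bexI)
    show "v \<bullet> rep (dtPsi Psi S v) - \<phi> (- (transpose S *v rep (dtPsi Psi S v))) = Psi j"
      using key[of "rep (dtPsi Psi S v)"] c(2) Psi_eq[of j] by simp
    show "dtPsi Psi S v \<in> cotang S" by (rule c(1))
  next
    fix U assume "U \<in> cotang S"
    show "v \<bullet> rep U - \<phi> (- (transpose S *v rep U)) \<le> Psi j"
      using key[of "rep U"] Psi_ge[of j "- (transpose S *v rep U)"] by simp
  qed
qed

lemma gf_jdag:
  assumes U: "U \<in> cotang S"
  defines "f \<equiv> - (transpose S *v rep U)"
  shows "- (S *v g f) \<in> tang S" "jdag Psi S (- (S *v g f)) = g f"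
proof -
  show "- (S *v g f) \<in> tang S" using tang_iff by blast
  have "is_jdag Psi S (- (S *v g f)) (g f)" by (rule KKT_suff[of _ _ "rep U"]) (simp_all add: f_def)
  thus "jdag Psi S (- (S *v g f)) = g f" by (rule jdag_eq)
qed

lemma LF2: assumes U: "U \<in> cotang S"
  shows "is_max_of (tang S) (\<lambda>v. dpair v U - tPsi Psi S v) (tPsistar \<phi> S U)"
proof -
  define f where "f = - (transpose S *v rep U)"
  have g: "- (S *v g f) \<in> tang S" "jdag Psi S (- (S *v g f)) = g f"
    using gf_jdag[OF U] unfolding f_def by auto
  show ?thesis unfolding is_max_of_def dpair_def tPsistar_def tPsi_def f_def[symmetric]
  proof (intro conjI ballI bexI)
    have "(- (S *v g f)) \<bullet> rep U = g f \<bullet> f" using pair_lem[of "g f" "rep U"] unfolding f_def by simp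
    moreover have "Psi (g f) = g f \<bullet> f - \<phi> f" using Psi_eq[of "g f"] by simp
    ultimately show "(- (S *v g f)) \<bullet> rep U - Psi (jdag Psi S (- (S *v g f))) = \<phi> f"
      using g(2) by simp
    show "- (S *v g f) \<in> tang S" by (rule g(1))
  next
    fix v assume v: "v \<in> tang S"
    define j where "j = jdag Psi S v"
    have jv: "- (S *v j) = v" using jdag[OF v] unfolding j_def is_jdag_def by blast
    have "v \<bullet> rep U = j \<bullet> f" using pair_lem[of j "rep U"] jv unfolding f_def by simp
    thus "v \<bullet> rep U - Psi (jdag Psi S v) \<le> \<phi> f" using Psi_ge[of j f] unfolding j_def by simp
  qed
qed


lemma tPsi_deriv:
  assumes v: "v \<in> tang S" and w: "w \<in> tang S"
  shows "((\<lambda>t. tPsi Psi S (v + t *\<^sub>R w)) has_real_derivative dpair w (dtPsi Psi S v)) (at 0)"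
proof -
  define j where "j = jdag Psi S v"
  define r where "r = rep (dtPsi Psi S v)"
  have jv: "- (S *v j) = v" using jdag[OF v] unfolding j_def is_jdag_def by blast
  have hj: "h j = - (transpose S *v r)" using dtPsi_char[OF v] unfolding j_def r_def by auto
  obtain k where k: "- (S *v k) = w" using w tang_iff by blast
  define p where "p = (\<lambda>t. tPsi Psi S (v + t *\<^sub>R w))"
  define q where "q = (\<lambda>t::real. Psi (j + t *\<^sub>R k))"
  have p0: "p 0 = v \<bullet> r - \<phi> (h j)"
    using Psi_eq[of j] pair_lem[of j r] jv hj unfolding p_def tPsi_def j_def by simp
  have lo: "p 0 + t * (w \<bullet> r) \<le> p t" for t
  proof -
    define j' where "j' = jdag Psi S (v + t *\<^sub>R w)"
    have j'v: "- (S *v j') = v + t *\<^sub>R w" using jdag[OF tang_add[OF v w]] unfolding j'_def is_jdag_def by blast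
    have "j' \<bullet> h j = (v + t *\<^sub>R w) \<bullet> r" using pair_lem[of j' r] j'v hj by simp
    hence "(v + t *\<^sub>R w) \<bullet> r - \<phi> (h j) \<le> p t" using Psi_ge[of j' "h j"] unfolding p_def tPsi_def j'_def by simp
    thus ?thesis using p0 by (simp add: inner_add_left)
  qed
  have up: "p t \<le> q t" for t
  proof -
    have "- (S *v (j + t *\<^sub>R k)) = v + t *\<^sub>R w" using jv k
      by (auto simp: matrix_vector_right_distrib matrix_vector_mult_scaleR)
    thus ?thesis using jdag[OF tang_add[OF v w], of t] unfolding p_def q_def tPsi_def is_jdag_def by blast
  qed
  have q0: "q 0 = p 0" unfolding q_def p_def tPsi_def j_def by simp
  have dq: "(q has_real_derivative (w \<bullet> r)) (at 0)"
  proof -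
    have i: "((\<lambda>t. j + t *\<^sub>R k) has_derivative (\<lambda>t. t *\<^sub>R k)) (at 0)"
      by (auto intro!: derivative_eq_intros)
    have d: "(q has_derivative (\<lambda>t. h j \<bullet> (t *\<^sub>R k))) (at 0)"
      using has_derivative_compose[OF i Psi_der[of "j + 0 *\<^sub>R k"]] by (simp add: q_def)
    have "h j \<bullet> k = w \<bullet> r" using pair_lem[of k r] k hj by (simp add: inner_commute)
    hence "(\<lambda>t. h j \<bullet> (t *\<^sub>R k)) = (*) (w \<bullet> r)" by (auto simp: mult.commute)
    thus ?thesis using d unfolding has_field_derivative_def by simp
  qed
  have "(p has_real_derivative (w \<bullet> r)) (at 0)" by (rule deriv_squeeze[OF lo up q0 dq])
  thus ?thesis unfolding p_def dpair_def r_def .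
qed

lemma T_rep_lin: "transpose S *v rep (qcls S (r + t *\<^sub>R s)) = transpose S *v r + t *\<^sub>R (transpose S *v s)"
  by (simp add: matrix_vector_right_distrib matrix_vector_mult_scaleR)

lemma tPsistar_deriv:
  assumes U: "U \<in> cotang S" and W: "W \<in> cotang S"
  shows "((\<lambda>t. tPsistar \<phi> S (qcls S (rep U + t *\<^sub>R rep W))) has_real_derivative (dtPsistar \<phi> S U \<bullet> rep W)) (at 0)"
proof -
  define a where "a = - (transpose S *v rep U)"
  define b where "b = transpose S *v rep W"
  have e: "(\<lambda>t. tPsistar \<phi> S (qcls S (rep U + t *\<^sub>R rep W))) = (\<lambda>t. \<phi> (a - t *\<^sub>R b))"
    unfolding tPsistar_def T_rep_lin a_def b_def by (simp add: algebra_simps)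
  have i: "((\<lambda>t. a - t *\<^sub>R b) has_derivative (\<lambda>t. - (t *\<^sub>R b))) (at 0)"
    by (auto intro!: derivative_eq_intros)
  have d: "((\<lambda>t. \<phi> (a - t *\<^sub>R b)) has_derivative (\<lambda>t. g a \<bullet> (- (t *\<^sub>R b)))) (at 0)"
    using has_derivative_compose[OF i der[of "a - 0 *\<^sub>R b"]] by simp
  have "dtPsistar \<phi> S U \<bullet> rep W = - (g a \<bullet> b)"
    unfolding dtPsistar_def grad_phi a_def[symmetric] b_def using adj[of S "g a" "rep W"] by (simp add: inner_minus_left)
  hence "(\<lambda>t. g a \<bullet> (- (t *\<^sub>R b))) = (*) (dtPsistar \<phi> S U \<bullet> rep W)" by (auto simp: mult.commute)
  thus ?thesis using d unfolding e has_field_derivative_def by simp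
qed

lemma inv1: assumes v: "v \<in> tang S" shows "dtPsistar \<phi> S (dtPsi Psi S v) = v"
proof -
  define j where "j = jdag Psi S v"
  have jv: "- (S *v j) = v" using jdag[OF v] unfolding j_def is_jdag_def by blast
  have hj: "h j = - (transpose S *v rep (dtPsi Psi S v))" using dtPsi_char[OF v] unfolding j_def by auto
  show ?thesis unfolding dtPsistar_def grad_phi hj[symmetric] using jv by simp
qed

lemma inv2: assumes U: "U \<in> cotang S" shows "dtPsi Psi S (dtPsistar \<phi> S U) = U"
proof -
  define f where "f = - (transpose S *v rep U)"
  have g: "- (S *v g f) \<in> tang S" "jdag Psi S (- (S *v g f)) = g f"
    using gf_jdag[OF U] unfolding f_def by auto
  have "h (jdag Psi S (- (S *v g f))) = f" using g(2) by simp
  hence "dtPsi Psi S (- (S *v g f)) = U" unfolding f_def by (rule dtPsi_eq[OF g(1)[unfolded f_def] U])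
  thus ?thesis unfolding dtPsistar_def grad_phi f_def .
qed

lemma dtPsistar_in: "U \<in> cotang S \<Longrightarrow> dtPsistar \<phi> S U \<in> tang S"
  unfolding dtPsistar_def using tang_iff by blast

lemma bij1: "bij_betw (dtPsi Psi S) (tang S) (cotang S)"
  by (rule bij_betw_byWitness[where f'="dtPsistar \<phi> S"]) (auto simp: inv1 inv2 dtPsistar_in dtPsi_char)

lemma bij2: "bij_betw (dtPsistar \<phi> S) (cotang S) (tang S)"
  by (rule bij_betw_byWitness[where f'="dtPsi Psi S"]) (auto simp: inv1 inv2 dtPsistar_in dtPsi_char)


lemma jdag_spec: "v \<in> tang S \<Longrightarrow> - (S *v jdag Psi S v) = v \<and> (\<forall>j'. - (S *v j') = v \<longrightarrow> Psi (jdag Psi S v) \<le> Psi j')"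
  using jdag unfolding is_jdag_def by blast

lemma tPsi_sc: "strictly_convex_on (tang S) (tPsi Psi S)"
  unfolding strictly_convex_on_def
proof (intro ballI impI allI)
  fix v1 v2 and t :: real assume v: "v1 \<in> tang S" "v2 \<in> tang S" "v1 \<noteq> v2" and t: "0 < t \<and> t < 1"
  define j1 where "j1 = jdag Psi S v1"
  define j2 where "j2 = jdag Psi S v2"
  have e1: "- (S *v j1) = v1" and e2: "- (S *v j2) = v2" using jdag_spec v unfolding j1_def j2_def by auto
  have ne: "j1 \<noteq> j2" using e1 e2 v(3) by auto
  define vt where "vt = (1 - t) *\<^sub>R v1 + t *\<^sub>R v2"
  have "- (S *v ((1 - t) *\<^sub>R j1 + t *\<^sub>R j2)) = vt" unfolding vt_def using e1 e2
    by (auto simp: matrix_vector_right_distrib matrix_vector_mult_scaleR)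
  moreover have "vt \<in> tang S" using calculation tang_iff by blast
  ultimately have "tPsi Psi S vt \<le> Psi ((1 - t) *\<^sub>R j1 + t *\<^sub>R j2)"
    using jdag_spec unfolding tPsi_def by blast
  also have "\<dots> < (1 - t) * Psi j1 + t * Psi j2" using Psi_sc[OF ne] t by blast
  finally show "tPsi Psi S ((1 - t) *\<^sub>R v1 + t *\<^sub>R v2) < (1 - t) * tPsi Psi S v1 + t * tPsi Psi S v2"
    unfolding vt_def tPsi_def j1_def j2_def .
qed

lemma tPsi_coer: "\<exists>R. \<forall>v\<in>tang S. R \<le> norm v \<longrightarrow> M * norm v \<le> tPsi Psi S v"
proof -
  obtain K where K: "K > 0" "\<And>x. norm (S *v x) \<le> norm x * K"
    using bounded_linear.pos_bounded[OF matrix_vector_mul_bounded_linear[of S]] by blast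
  define M' where "M' = max M 0 + 1"
  have M'0: "M' \<ge> 0" unfolding M'_def by simp
  obtain C where C: "\<And>j. (M' * K) * norm j - C \<le> Psi j" using Psi_coer[of "M' * K"] M'0 K(1) by auto
  have "M * norm v \<le> tPsi Psi S v" if v: "v \<in> tang S" "C \<le> norm v" for v
  proof -
    define j where "j = jdag Psi S v"
    have e: "- (S *v j) = v" using jdag_spec v unfolding j_def by auto
    have "norm v \<le> norm j * K" using K(2)[of j] e by auto
    hence "M' * norm v \<le> (M' * K) * norm j" using M'0 by (metis mult.assoc mult.commute mult_left_mono)
    hence a: "M' * norm v - C \<le> tPsi Psi S v" using C[of j] unfolding tPsi_def j_def by linarith
    have "M * norm v \<le> (M' - 1) * norm v" by (rule mult_right_mono) (auto simp: M'_def)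
    thus ?thesis using a v(2) by (simp add: algebra_simps)
  qed
  thus ?thesis by blast
qed

lemma tPsi_even: "v \<in> tang S \<Longrightarrow> tPsi Psi S (- v) = tPsi Psi S v"
proof -
  assume v: "v \<in> tang S"
  define j where "j = jdag Psi S v"
  have e: "- (S *v j) = v" "\<And>j'. - (S *v j') = v \<Longrightarrow> Psi j \<le> Psi j'" using jdag_spec[OF v] unfolding j_def by auto
  have "is_jdag Psi S (- v) (- j)" unfolding is_jdag_def
  proof (intro conjI allI impI)
    show "- (S *v - j) = - v" using e(1) by (simp add: mv_neg)
    fix j' assume "- (S *v j') = - v"
    hence "- (S *v (- j')) = v" by (simp add: mv_neg)
    hence "Psi j \<le> Psi (- j')" by (rule e(2))
    thus "Psi (- j) \<le> Psi j'" by (simp add: Psi_even)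
  qed
  hence "jdag Psi S (- v) = - j" by (rule jdag_eq)
  thus ?thesis unfolding tPsi_def j_def by (simp add: Psi_even)
qed

lemma tPsi_zero: "tPsi Psi S 0 = 0"
proof -
  have "is_jdag Psi S 0 0" unfolding is_jdag_def by (simp add: Psi_zero Psi_nonneg)
  hence "jdag Psi S 0 = 0" by (rule jdag_eq)
  thus ?thesis unfolding tPsi_def by (simp add: Psi_zero)
qed

lemma tPsistar_sc:
  assumes U: "U \<in> cotang S" and U': "U' \<in> cotang S" and ne: "U \<noteq> U'" and t: "0 < t" "t < 1"
  shows "tPsistar \<phi> S (qcls S ((1 - t) *\<^sub>R rep U + t *\<^sub>R rep U')) < (1 - t) * tPsistar \<phi> S U + t * tPsistar \<phi> S U'"
proof -
  have "transpose S *v rep U \<noteq> transpose S *v rep U'"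
    using qcls_eq[of S "rep U" "rep U'"] cotang_rep[OF U] cotang_rep[OF U'] ne by auto
  hence ne': "- (transpose S *v rep U) \<noteq> - (transpose S *v rep U')" by simp
  have "- (transpose S *v rep (qcls S ((1 - t) *\<^sub>R rep U + t *\<^sub>R rep U'))) = (1 - t) *\<^sub>R (- (transpose S *v rep U)) + t *\<^sub>R (- (transpose S *v rep U'))"
    by (simp add: matrix_vector_right_distrib matrix_vector_mult_scaleR)
  thus ?thesis unfolding tPsistar_def using sc'[OF ne' t] by simp
qed

lemma qnorm_nonneg: "0 \<le> qnorm (qcls S u)"
  unfolding qnorm_def by (rule cInf_greatest) (auto simp: qcls_def)

lemma qnorm_bound: "\<exists>e>0. \<forall>u. e * qnorm (qcls S u) \<le> norm (transpose S *v u)"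
proof -
  define V where "V = range (\<lambda>j. S *v j)"
  have sV: "subspace V" unfolding V_def
    by (rule linear_subspace_image) (auto simp: matrix_vector_mul_linear)
  have cV: "closed V" using sV by (rule closed_subspace)
  have inj: "\<forall>x\<in>V. transpose S *v x = 0 \<longrightarrow> x = 0"
  proof (intro ballI impI)
    fix x assume "x \<in> V" "transpose S *v x = 0"
    then obtain j where j: "x = S *v j" unfolding V_def by blast
    have "x \<bullet> x = j \<bullet> (transpose S *v x)" using adj[of S j x] j by simp
    thus "x = 0" using \<open>transpose S *v x = 0\<close> by simp
  qed
  obtain e where e: "e > 0" "\<And>x. x \<in> V \<Longrightarrow> e * norm x \<le> norm (transpose S *v x)"
    using injective_imp_isometric[OF cV sV matrix_vector_mul_bounded_linear inj] by blast
  have "e * qnorm (qcls S u) \<le> norm (transpose S *v u)" for u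
  proof -
    obtain y z where yz: "y \<in> span V" "\<And>w. w \<in> span V \<Longrightarrow> orthogonal z w" "u = y + z"
      using orthogonal_subspace_decomp_exists[of V u] by blast
    have yV: "y \<in> V" using yz(1) sV by (metis span_eq_iff)
    have "S *v (transpose S *v z) \<in> span V" unfolding V_def by (rule span_base) (rule rangeI)
    hence "z \<bullet> (S *v (transpose S *v z)) = 0" using yz(2) unfolding orthogonal_def by blast
    hence "(transpose S *v z) \<bullet> (transpose S *v z) = 0" using adj[of S "transpose S *v z" z] by (simp add: inner_commute)
    hence Tz: "transpose S *v z = 0" by simp
    have Ty: "transpose S *v y = transpose S *v u" using yz(3) Tz by (simp add: matrix_vector_right_distrib)
    have "qnorm (qcls S u) \<le> norm y" unfolding qnorm_def
      by (rule cInf_lower) (use Ty in \<open>auto simp: qcls_def intro: bdd_belowI[of _ 0]\<close>)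
    hence "e * qnorm (qcls S u) \<le> e * norm y" using e(1) by simp
    also have "\<dots> \<le> norm (transpose S *v u)" using e(2)[OF yV] Ty by simp
    finally show ?thesis .
  qed
  thus ?thesis using e(1) by blast
qed

lemma tPsistar_coer: "\<exists>R. \<forall>U\<in>cotang S. R \<le> qnorm U \<longrightarrow> M * qnorm U \<le> tPsistar \<phi> S U"
proof -
  obtain e where e: "e > 0" "\<And>u. e * qnorm (qcls S u) \<le> norm (transpose S *v u)" using qnorm_bound by blast
  define M' where "M' = max M 0"
  obtain R' where R': "R' > 0" "\<And>f. R' \<le> norm f \<Longrightarrow> (M' / e) * norm f \<le> \<phi> f" using coer_bound[of "M' / e"] by blast
  have "M * qnorm U \<le> tPsistar \<phi> S U" if U: "U \<in> cotang S" "R' / e \<le> qnorm U" for U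
  proof -
    define r where "r = rep U"
    have Ur: "U = qcls S r" using cotang_rep[OF U(1)] unfolding r_def .
    have b: "e * qnorm U \<le> norm (transpose S *v r)" using e(2)[of r] Ur by simp
    have "R' \<le> e * qnorm U" using U(2) e(1) by (simp add: divide_le_eq mult.commute)
    hence "R' \<le> norm (- (transpose S *v r))" using b by simp
    hence "(M' / e) * norm (- (transpose S *v r)) \<le> \<phi> (- (transpose S *v r))" by (rule R'(2))
    hence c: "(M' / e) * norm (transpose S *v r) \<le> tPsistar \<phi> S U" unfolding tPsistar_def r_def by simp
    have M'0: "0 \<le> M' / e" using e(1) by (simp add: M'_def)
    have "(M' / e) * (e * qnorm U) \<le> (M' / e) * norm (transpose S *v r)" using mult_left_mono[OF b M'0] .
    moreover have "(M' / e) * (e * qnorm U) = M' * qnorm U" using e(1) by simp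
    moreover have "M * qnorm U \<le> M' * qnorm U" using qnorm_nonneg[of r] Ur by (simp add: M'_def mult_right_mono)
    ultimately show ?thesis using c by linarith
  qed
  thus ?thesis by blast
qed

lemma tPsistar_even: "U \<in> cotang S \<Longrightarrow> tPsistar \<phi> S (qcls S (- rep U)) = tPsistar \<phi> S U"
  unfolding tPsistar_def by (simp add: mv_neg even)

lemma tPsistar_zero: "tPsistar \<phi> S (qcls S 0) = 0"
  unfolding tPsistar_def by (simp add: z)

end

theorem mainTheorem8:
  fixes S :: "real^'e::finite^'x::finite"
    and psistar :: "real^'x \<Rightarrow> real^'e \<Rightarrow> real"
    and x :: "real^'x"
  assumes S_int: "\<forall>i k. S $ i $ k \<in> \<int>"
    and diss: "\<forall>y. (\<forall>i. 0 < y $ i) \<longrightarrow> dissipation (psistar y)"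
    and x_pos: "\<forall>i. 0 < x $ i"
  defines "\<Psi>s \<equiv> psistar x"
    and "\<Psi> \<equiv> LF_conj (psistar x)"
  shows
    \<comment> \<open>j-dagger is well defined\<close>
    "(\<forall>v\<in>tang S. \<exists>!j. is_jdag \<Psi> S v j)
    \<comment> \<open>Legendre-Fenchel duality\<close>
     \<and> (\<forall>v\<in>tang S. is_max_of (cotang S) (\<lambda>U. dpair v U - tPsistar \<Psi>s S U) (tPsi \<Psi> S v))
     \<and> (\<forall>U\<in>cotang S. is_max_of (tang S) (\<lambda>v. dpair v U - tPsi \<Psi> S v) (tPsistar \<Psi>s S U))
    \<comment> \<open>the Legendre maps are well defined, are the derivatives, and are mutually inverse bijections\<close>
     \<and> (\<forall>v\<in>tang S. dtPsi \<Psi> S v \<in> cotang S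
            \<and> grad \<Psi> (jdag \<Psi> S v) = - (transpose S *v rep (dtPsi \<Psi> S v)))
     \<and> (\<forall>v\<in>tang S. \<forall>w\<in>tang S.
            ((\<lambda>t. tPsi \<Psi> S (v + t *\<^sub>R w)) has_real_derivative dpair w (dtPsi \<Psi> S v)) (at 0))
     \<and> (\<forall>U\<in>cotang S. \<forall>W\<in>cotang S.
            ((\<lambda>t. tPsistar \<Psi>s S (qcls S (rep U + t *\<^sub>R rep W)))
               has_real_derivative (dtPsistar \<Psi>s S U \<bullet> rep W)) (at 0))
     \<and> bij_betw (dtPsi \<Psi> S) (tang S) (cotang S)
     \<and> bij_betw (dtPsistar \<Psi>s S) (cotang S) (tang S)
     \<and> (\<forall>v\<in>tang S. dtPsistar \<Psi>s S (dtPsi \<Psi> S v) = v)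
     \<and> (\<forall>U\<in>cotang S. dtPsi \<Psi> S (dtPsistar \<Psi>s S U) = U)
    \<comment> \<open>tilde Psi is a dissipation function on Im S\<close>
     \<and> strictly_convex_on (tang S) (tPsi \<Psi> S)
     \<and> (\<forall>M. \<exists>R. \<forall>v\<in>tang S. R \<le> norm v \<longrightarrow> M * norm v \<le> tPsi \<Psi> S v)
     \<and> (\<forall>v\<in>tang S. tPsi \<Psi> S (- v) = tPsi \<Psi> S v)
     \<and> tPsi \<Psi> S 0 = 0
    \<comment> \<open>tilde Psi^* is a dissipation function on R^{N_X} / Ker S^T\<close>
     \<and> (\<forall>U\<in>cotang S. \<forall>U'\<in>cotang S. U \<noteq> U' \<longrightarrow>
          (\<forall>t::real. 0 < t \<and> t < 1 \<longrightarrow>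
             tPsistar \<Psi>s S (qcls S ((1 - t) *\<^sub>R rep U + t *\<^sub>R rep U'))
               < (1 - t) * tPsistar \<Psi>s S U + t * tPsistar \<Psi>s S U'))
     \<and> (\<forall>M. \<exists>R. \<forall>U\<in>cotang S. R \<le> qnorm U \<longrightarrow> M * qnorm U \<le> tPsistar \<Psi>s S U)
     \<and> (\<forall>U\<in>cotang S. tPsistar \<Psi>s S (qcls S (- rep U)) = tPsistar \<Psi>s S U)
     \<and> tPsistar \<Psi>s S (qcls S 0) = 0"
proof -
  have d: "dissipation (psistar x)" using diss x_pos by blast
  then obtain g where der: "\<And>f. (psistar x has_derivative (\<lambda>h. g f \<bullet> h)) (at f)"
      and gc: "continuous_on UNIV g" unfolding dissipation_def C1_fun_def by blast
  interpret dfunS "psistar x" g S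
    by unfold_locales (use d der gc in \<open>auto simp: dissipation_def\<close>)
  have h1: "\<forall>v\<in>tang S. \<exists>!j. is_jdag (LF_conj (psistar x)) S v j"
    using jdag_ex jdag_unique by blast
  have h2: "\<forall>v\<in>tang S. is_max_of (cotang S) (\<lambda>U. dpair v U - tPsistar (psistar x) S U) (tPsi (LF_conj (psistar x)) S v)"
    using LF1 by blast
  have h3: "\<forall>U\<in>cotang S. is_max_of (tang S) (\<lambda>v. dpair v U - tPsi (LF_conj (psistar x)) S v) (tPsistar (psistar x) S U)"
    using LF2 by blast
  have h4: "\<forall>v\<in>tang S. dtPsi (LF_conj (psistar x)) S v \<in> cotang S
            \<and> grad (LF_conj (psistar x)) (jdag (LF_conj (psistar x)) S v) = - (transpose S *v rep (dtPsi (LF_conj (psistar x)) S v))"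
    using dtPsi_char unfolding grad_Psi by blast
  have h5: "\<forall>v\<in>tang S. \<forall>w\<in>tang S.
            ((\<lambda>t. tPsi (LF_conj (psistar x)) S (v + t *\<^sub>R w)) has_real_derivative dpair w (dtPsi (LF_conj (psistar x)) S v)) (at 0)"
    using tPsi_deriv by blast
  have h6: "\<forall>U\<in>cotang S. \<forall>W\<in>cotang S.
            ((\<lambda>t. tPsistar (psistar x) S (qcls S (rep U + t *\<^sub>R rep W)))
               has_real_derivative (dtPsistar (psistar x) S U \<bullet> rep W)) (at 0)"
    using tPsistar_deriv by blast
  have h7: "\<forall>v\<in>tang S. dtPsistar (psistar x) S (dtPsi (LF_conj (psistar x)) S v) = v" using inv1 by blast
  have h8: "\<forall>U\<in>cotang S. dtPsi (LF_conj (psistar x)) S (dtPsistar (psistar x) S U) = U" using inv2 by blast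
  have h9: "\<forall>M. \<exists>R. \<forall>v\<in>tang S. R \<le> norm v \<longrightarrow> M * norm v \<le> tPsi (LF_conj (psistar x)) S v"
    using tPsi_coer by blast
  have h10: "\<forall>v\<in>tang S. tPsi (LF_conj (psistar x)) S (- v) = tPsi (LF_conj (psistar x)) S v"
    using tPsi_even by blast
  have h11: "\<forall>U\<in>cotang S. \<forall>U'\<in>cotang S. U \<noteq> U' \<longrightarrow>
          (\<forall>t::real. 0 < t \<and> t < 1 \<longrightarrow>
             tPsistar (psistar x) S (qcls S ((1 - t) *\<^sub>R rep U + t *\<^sub>R rep U'))
               < (1 - t) * tPsistar (psistar x) S U + t * tPsistar (psistar x) S U')"
    using tPsistar_sc by blast
  have h12: "\<forall>M. \<exists>R. \<forall>U\<in>cotang S. R \<le> qnorm U \<longrightarrow> M * qnorm U \<le> tPsistar (psistar x) S U"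
    using tPsistar_coer by blast
  have h13: "\<forall>U\<in>cotang S. tPsistar (psistar x) S (qcls S (- rep U)) = tPsistar (psistar x) S U"
    using tPsistar_even by blast
  show ?thesis unfolding \<Psi>s_def \<Psi>_def
    by (intro conjI h1 h2 h3 h4 h5 h6 h7 h8 h9 h10 h11 h12 h13 bij1 bij2 tPsi_sc tPsi_zero tPsistar_zero)
qed

end
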